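(* Let $K\ge 2$ and let $r\in[0,1]^K$ satisfy $r(1)>r(2)>\cdots>r(K)$. Fix a sub-optimal arm $j\in\{2,\ldots,K\}$. For a policy $\pi=\pi_\theta$ write $\varepsilon:=1-\pi(j)$ and $p_a:=\pi(a)$. There exists $\varepsilon_0>0$, depending on the reward gaps and $K$, such that for all $\varepsilon\in(0,\varepsilon_0)$: if $p_1\ge \varepsilon/K$, then under the enlightened gradient (EG) flow \[ \dot\theta(1)-\dot\theta(j)\;\ge\;\frac{\Delta_{1j}}{4K}\,\varepsilon . \]
   Context: $K$-armed bandit: the policy is parameterized by logits $\theta\in\mathbb{R}^K$ via the softmax $\pi_\theta(a)=e^{\theta(a)}/\sum_{a'}e^{\theta(a')}$. The advantage is $U(a):=r(a)-\pi_\theta^\top r$, and $\Delta_{ab}:=r(a)-r(b)$. A gated policy-gradient flow with weights $w(a)\ge 0$ is $\dot\theta(a)=\sum_{a'=1}^K w(a')\,\pi(a')\,U(a')\,(\mathbf{1}\{a=a'\}-\pi(a))$. The enlightened gradient (EG) flow is the case $w(a)=\mathbf{1}\{U(a)>0\}$. *)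

theory Defs
  imports Complex_Main
begin

text \<open>Arms are indexed by 1..K; logits are a function nat => real (only values on 1..K matter).\<close>

definition softmax :: "nat \<Rightarrow> (nat \<Rightarrow> real) \<Rightarrow> nat \<Rightarrow> real" where
  "softmax K \<theta> a = exp (\<theta> a) / (\<Sum>a'\<in>{1..K}. exp (\<theta> a'))"

definition advantage :: "nat \<Rightarrow> (nat \<Rightarrow> real) \<Rightarrow> (nat \<Rightarrow> real) \<Rightarrow> nat \<Rightarrow> real" where
  "advantage K r \<theta> a = r a - (\<Sum>a'\<in>{1..K}. softmax K \<theta> a' * r a')"

definition gap :: "(nat \<Rightarrow> real) \<Rightarrow> nat \<Rightarrow> nat \<Rightarrow> real" where
  "gap r a b = r a - r b"

text \<open>Gated policy-gradient flow with weights w: the time derivative of theta(a).\<close>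
definition gated_pg_flow ::
  "nat \<Rightarrow> (nat \<Rightarrow> real) \<Rightarrow> (nat \<Rightarrow> real) \<Rightarrow> (nat \<Rightarrow> real) \<Rightarrow> nat \<Rightarrow> real" where
  "gated_pg_flow K w r \<theta> a =
     (\<Sum>a'\<in>{1..K}. w a' * softmax K \<theta> a' * advantage K r \<theta> a'
        * ((if a = a' then 1 else 0) - softmax K \<theta> a))"

definition eg_flow :: "nat \<Rightarrow> (nat \<Rightarrow> real) \<Rightarrow> (nat \<Rightarrow> real) \<Rightarrow> nat \<Rightarrow> real" where
  "eg_flow K r \<theta> a =
     gated_pg_flow K (\<lambda>a'. if advantage K r \<theta> a' > 0 then 1 else 0) r \<theta> a"

end

theory Submission
  imports Defs
begin

lemma flow_eq:
  assumes "a \<in> {1..K}"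
  shows "gated_pg_flow K w r \<theta> a = w a * softmax K \<theta> a * advantage K r \<theta> a
     - softmax K \<theta> a * (\<Sum>a'\<in>{1..K}. w a' * softmax K \<theta> a' * advantage K r \<theta> a')"
proof -
  let ?f = "\<lambda>a'. w a' * softmax K \<theta> a' * advantage K r \<theta> a'"
  have "gated_pg_flow K w r \<theta> a = (\<Sum>a'\<in>{1..K}. ?f a' * (if a = a' then 1 else 0) - ?f a' * softmax K \<theta> a)"
    unfolding gated_pg_flow_def by (simp add: right_diff_distrib)
  also have "\<dots> = (\<Sum>a'\<in>{1..K}. ?f a' * (if a = a' then 1 else 0)) - (\<Sum>a'\<in>{1..K}. ?f a') * softmax K \<theta> a"
    by (simp add: sum_subtractf sum_distrib_right)
  also have "(\<Sum>a'\<in>{1..K}. ?f a' * (if a = a' then 1 else 0)) = ?f a"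
    using assms by (simp add: if_distrib cong: if_cong)
  finally show ?thesis by (simp add: mult.commute)
qed

lemma softmax_pos: "K \<ge> 1 \<Longrightarrow> softmax K \<theta> a > 0"
  unfolding softmax_def by (intro divide_pos_pos) (auto intro!: sum_pos)

lemma softmax_sum: "K \<ge> 1 \<Longrightarrow> (\<Sum>a\<in>{1..K}. softmax K \<theta> a) = 1"
proof -
  assume "K \<ge> 1"
  then have "(\<Sum>a\<in>{1..K}. exp (\<theta> a)) > 0" by (intro sum_pos) auto
  then show ?thesis unfolding softmax_def by (simp add: sum_divide_distrib[symmetric])
qed

lemma final_alg:
  fixes p1 pj U1 Uj S D e e0 k d :: real
  assumes "e = 1 - pj" "0 < e" "e < e0" "e0 \<le> 1/2" "e0 \<le> 3*D/(4*(1+2*k))"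
    "p1 \<ge> e / k" "p1 \<le> e" "U1 \<ge> D - e" "Uj \<le> e" "S \<ge> 0" "k \<ge> 2" "D > 0"
    "(Uj \<le> 0 \<and> d = p1*U1 + (pj-p1)*S) \<or> (Uj > 0 \<and> S \<ge> p1*U1 + pj*Uj \<and> d = p1*U1 - pj*Uj + (pj-p1)*S)"
  shows "d \<ge> D / (4*k) * e"
proof -
  have pj: "pj \<ge> p1" "pj \<le> 1" using assms(1-4,7) by linarith+
  have e1: "e * (1+2*k) \<le> 3*D/4"
  proof -
    have "e * (1+2*k) \<le> e0 * (1+2*k)" using assms by (intro mult_right_mono) auto
    also have "\<dots> \<le> 3*D/(4*(1+2*k)) * (1+2*k)" using assms by (intro mult_right_mono) auto
    also have "\<dots> = 3*D/4" using assms by (simp add: field_simps)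
    finally show ?thesis .
  qed
  have "e \<le> e * (1+2*k)" using assms by simp
  then have U1: "U1 > 0" using assms e1 by linarith
  have ek: "0 \<le> e / k" using assms by simp
  have eD: "e \<le> D" using assms e1 \<open>e \<le> e * (1+2*k)\<close> by linarith
  have p10: "0 \<le> p1" using ek assms by linarith
  have a1: "p1 * U1 \<ge> e / k * (D - e)"
    using assms U1 ek eD p10 by (intro mult_mono) auto
  have low: "d \<ge> p1 * U1 - 2 * e * e"
    using assms(13)
  proof
    assume h: "Uj \<le> 0 \<and> d = p1*U1 + (pj-p1)*S"
    have "(pj-p1)*S \<ge> 0" using pj assms by auto
    then show ?thesis using h assms by (smt (verit) mult_nonneg_nonneg)
  next
    assume h: "Uj > 0 \<and> S \<ge> p1*U1 + pj*Uj \<and> d = p1*U1 - pj*Uj + (pj-p1)*S"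
    have "(pj-p1)*S \<ge> (pj-p1)*(p1*U1 + pj*Uj)" using h pj by (intro mult_left_mono) auto
    then have "d \<ge> p1*U1*(1+pj-p1) - pj*Uj*(1-pj+p1)" using h by (simp add: algebra_simps)
    moreover have "p1*U1*(pj-p1) \<ge> 0" using p10 U1 pj by simp
    moreover have "p1*U1*(1+pj-p1) = p1*U1 + p1*U1*(pj-p1)" by (simp add: algebra_simps)
    moreover have "pj*Uj*(1-pj+p1) \<le> 1 * e * (2*e)"
      using pj h assms p10 by (intro mult_mono) auto
    ultimately show ?thesis by simp
  qed
  have "D / (4*k) * e \<le> e / k * (D - e) - 2*e*e"
  proof -
    have "e/k * (D - e) - 2*e*e - D/(4*k)*e = e/k * (3*D/4 - e - 2*k*e)"
      using assms by (simp add: field_simps)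
    have "3*D/4 - e - 2*k*e \<ge> 0" using e1 by (simp add: algebra_simps)
    then have "e/k * (3*D/4 - e - 2*k*e) \<ge> 0" by (intro mult_nonneg_nonneg ek)
    also note \<open>e/k * (D - e) - 2*e*e - D/(4*k)*e = e/k * (3*D/4 - e - 2*k*e)\<close>[symmetric]
    finally show ?thesis by simp
  qed
  then show ?thesis using low a1 by simp
qed

theorem theorem1:
  fixes K :: nat and r :: "nat \<Rightarrow> real" and j :: nat
  assumes "K \<ge> 2"
    and "\<forall>a\<in>{1..K}. 0 \<le> r a \<and> r a \<le> 1"
    and "\<forall>a b. 1 \<le> a \<and> a < b \<and> b \<le> K \<longrightarrow> r a > r b"
    and "j \<in> {2..K}"
  shows "\<exists>\<epsilon>0 > 0. \<forall>\<theta> :: nat \<Rightarrow> real.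
           let \<epsilon> = 1 - softmax K \<theta> j in
           (0 < \<epsilon> \<and> \<epsilon> < \<epsilon>0 \<and> softmax K \<theta> 1 \<ge> \<epsilon> / real K) \<longrightarrow>
             eg_flow K r \<theta> 1 - eg_flow K r \<theta> j \<ge> gap r 1 j / (4 * real K) * \<epsilon>"
proof -
  define D where "D = r 1 - r j"
  have jK: "1 \<le> j" "j \<le> K" "j \<noteq> 1" using assms(4) by auto
  have D: "D > 0" using assms(3) jK unfolding D_def by (auto dest: spec[of _ 1] spec[of _ j])
  define e0 :: real where "e0 = min (1/2) (3*D/(4*(1+2*real K)))"
  have e0: "e0 > 0" using D unfolding e0_def by auto
  show ?thesis
  proof (rule exI[of _ e0], intro conjI e0 allI)
    fix \<theta> :: "nat \<Rightarrow> real"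
    define p where "p = softmax K \<theta>"
    define e where "e = 1 - p j"
    define P where "P = {1..K::nat}"
    have K1: "K \<ge> 1" using assms(1) by simp
    have pp: "\<And>a. p a > 0" unfolding p_def using softmax_pos[OF K1] by auto
    have ps: "sum p P = 1" unfolding p_def P_def using softmax_sum[OF K1] by auto
    have fin: "finite P" unfolding P_def by simp
    have inP: "1 \<in> P" "j \<in> P" using jK K1 unfolding P_def by auto
    define m where "m = (\<Sum>a\<in>P. p a * r a)"
    define U where "U = (\<lambda>a. r a - m)"
    have adv: "advantage K r \<theta> = U" unfolding U_def m_def p_def P_def advantage_def by auto
    define w where "w = (\<lambda>a'. if U a' > 0 then 1 else (0::real))"
    define S where "S = (\<Sum>a\<in>P. w a * p a * U a)"
    have eg: "\<And>a. a \<in> P \<Longrightarrow> eg_flow K r \<theta> a = w a * p a * U a - p a * S"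
      unfolding eg_flow_def adv S_def w_def p_def P_def
      by (subst flow_eq) (auto simp: adv)
    have Snn: "\<And>a. 0 \<le> w a * p a * U a" unfolding w_def using pp by (auto intro: mult_nonneg_nonneg less_imp_le)
    have S0: "S \<ge> 0" unfolding S_def using Snn by (intro sum_nonneg) auto
    have S2: "S \<ge> w 1 * p 1 * U 1 + w j * p j * U j"
    proof -
      have "(\<Sum>a\<in>{1,j}. w a * p a * U a) \<le> S"
        unfolding S_def using fin inP Snn by (intro sum_mono2) auto
      then show ?thesis using jK by simp
    qed
    have p1e: "p 1 \<le> e"
    proof -
      have "(\<Sum>a\<in>{1,j}. p a) \<le> sum p P" using fin inP pp by (intro sum_mono2) (auto intro: less_imp_le)
      then show ?thesis using jK ps unfolding e_def by simp
    qed
    have ind: "(\<Sum>a\<in>P. p a * (if a = j then 0 else 1)) = e"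
    proof -
      have "(\<Sum>a\<in>P. p a * (if a = j then 0 else 1)) = (\<Sum>a\<in>P. p a - (if a = j then p a else 0))"
        by (intro sum.cong) auto
      also have "\<dots> = sum p P - p j" using fin inP by (simp add: sum_subtractf)
      finally show ?thesis using ps e_def by simp
    qed
    have mr: "m - r j = (\<Sum>a\<in>P. p a * (r a - r j))"
      unfolding m_def using ps by (simp add: right_diff_distrib sum_subtractf sum_distrib_right[symmetric])
    have rr: "\<And>a. a \<in> P \<Longrightarrow> \<bar>r a - r j\<bar> \<le> (if a = j then 0 else 1)"
    proof -
      fix a assume "a \<in> P"
      then have "0 \<le> r a" "r a \<le> 1" "0 \<le> r j" "r j \<le> 1" using assms(2) inP unfolding P_def by auto
      then show "\<bar>r a - r j\<bar> \<le> (if a = j then 0 else 1)" by auto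
    qed
    have mu1: "m - r j \<le> e"
    proof -
      have "(\<Sum>a\<in>P. p a * (r a - r j)) \<le> (\<Sum>a\<in>P. p a * (if a = j then 0 else 1))"
        using rr pp by (intro sum_mono mult_left_mono) (auto intro: less_imp_le simp: abs_le_iff)
      then show ?thesis using mr ind by simp
    qed
    have mu2: "r j - m \<le> e"
    proof -
      have "(\<Sum>a\<in>P. p a * (r j - r a)) \<le> (\<Sum>a\<in>P. p a * (if a = j then 0 else 1))"
        using rr pp by (intro sum_mono mult_left_mono) (auto intro: less_imp_le simp: abs_le_iff)
      moreover have "(\<Sum>a\<in>P. p a * (r j - r a)) = - (\<Sum>a\<in>P. p a * (r a - r j))"
        by (simp add: sum_negf[symmetric] algebra_simps)
      ultimately show ?thesis using mr ind by simp
    qed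
    show "let \<epsilon> = 1 - softmax K \<theta> j in
           (0 < \<epsilon> \<and> \<epsilon> < e0 \<and> softmax K \<theta> 1 \<ge> \<epsilon> / real K) \<longrightarrow>
             eg_flow K r \<theta> 1 - eg_flow K r \<theta> j \<ge> gap r 1 j / (4 * real K) * \<epsilon>"
      unfolding Let_def p_def[symmetric] e_def[symmetric] gap_def D_def[symmetric]
    proof (intro impI, elim conjE)
      assume h: "0 < e" "e < e0" "e / real K \<le> p 1"
      have U1: "U 1 \<ge> D - e" using mu1 unfolding U_def D_def by simp
      have Uj: "U j \<le> e" using mu2 unfolding U_def by simp
      have "3*D/(4*(1+2*real K)) \<le> D" using D by (simp add: field_simps)
      then have "e < D" using h unfolding e0_def by linarith
      then have w1: "w 1 = 1" using U1 unfolding w_def by auto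
      have pj: "p j = 1 - e" using e_def by simp
      show "D / (4 * real K) * e \<le> eg_flow K r \<theta> 1 - eg_flow K r \<theta> j"
      proof (rule final_alg[where pj = "p j" and ?p1.0 = "p 1" and ?U1.0 = "U 1" and Uj = "U j" and S = S and ?e0.0 = e0])
        show "e0 \<le> 1/2" "e0 \<le> 3*D/(4*(1+2*real K))" unfolding e0_def by auto
        show "(U j \<le> 0 \<and> eg_flow K r \<theta> 1 - eg_flow K r \<theta> j = p 1*U 1 + (p j - p 1)*S) \<or>
          (U j > 0 \<and> S \<ge> p 1*U 1 + p j*U j \<and> eg_flow K r \<theta> 1 - eg_flow K r \<theta> j = p 1*U 1 - p j*U j + (p j-p 1)*S)"
        proof (cases "U j > 0")
          case True
          have "eg_flow K r \<theta> 1 = p 1 * U 1 - p 1 * S" using eg[OF inP(1)] w1 by simp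
          moreover have "eg_flow K r \<theta> j = p j * U j - p j * S" using eg[OF inP(2)] True unfolding w_def by simp
          moreover have "w j = 1" using True unfolding w_def by simp
          ultimately show ?thesis using S2 w1 True by (simp add: algebra_simps)
        next
          case False
          have "eg_flow K r \<theta> 1 = p 1 * U 1 - p 1 * S" using eg[OF inP(1)] w1 by simp
          moreover have "eg_flow K r \<theta> j = - p j * S" using eg[OF inP(2)] False unfolding w_def by simp
          ultimately show ?thesis using False by (simp add: algebra_simps)
        qed
      qed (insert h pj p1e U1 Uj S0 assms(1) D, auto)
    qed
  qed
qed

end
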